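(* An element $\boldsymbol\pi\in H_{1,2,2}$ is a prime of $H_{1,2,2}$ if and only if $N(\boldsymbol\pi)$ is a rational prime.
   Context: Let $\mathbf{i},\mathbf{j},\mathbf{k}$ be the standard quaternion units; $\overline{\mathbf{q}}$ is quaternion conjugation and $N(\mathbf{q})=\mathbf{q}\overline{\mathbf{q}}$. $H_{1,2,2}$ is the subring of the quaternions equal to the $\mathbb{Z}$-module generated by $\mathbf{v}_1=1$, $\mathbf{v}_2=\mathbf{i}$, $\mathbf{v}_3=\tfrac12(1+\mathbf{i}+\sqrt2\,\mathbf{j})$, $\mathbf{v}_4=\tfrac12(1+\mathbf{i}+\sqrt2\,\mathbf{k})$. A unit is an element invertible in $H_{1,2,2}$ (equivalently of norm 1). A prime of $H_{1,2,2}$ is a nonzero nonunit $\boldsymbol\pi$ such that whenever $\boldsymbol\pi=\mathbf{a}\mathbf{b}$ with $\mathbf{a},\mathbf{b}\in H_{1,2,2}$, at least one of $\mathbf{a},\mathbf{b}$ is a unit. *)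

theory Defs
  imports Complex_Main "HOL-Computational_Algebra.Primes"
begin

datatype quat = Quat (qre: real) (qi: real) (qj: real) (qk: real)

lemma quat_eqI: "qre x = qre y \<Longrightarrow> qi x = qi y \<Longrightarrow> qj x = qj y \<Longrightarrow> qk x = qk y \<Longrightarrow> x = y"
  by (cases x, cases y) simp

instantiation quat :: ring_1
begin
definition "0 = Quat 0 0 0 0"
definition "1 = Quat 1 0 0 0"
definition "x + y = Quat (qre x + qre y) (qi x + qi y) (qj x + qj y) (qk x + qk y)"
definition "x - y = Quat (qre x - qre y) (qi x - qi y) (qj x - qj y) (qk x - qk y)"
definition "- x = Quat (- qre x) (- qi x) (- qj x) (- qk x)"
definition "x * y = Quat
   (qre x * qre y - qi x * qi y - qj x * qj y - qk x * qk y)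
   (qre x * qi y + qi x * qre y + qj x * qk y - qk x * qj y)
   (qre x * qj y - qi x * qk y + qj x * qre y + qk x * qi y)
   (qre x * qk y + qi x * qj y - qj x * qi y + qk x * qre y)"
instance
  by standard (auto intro!: quat_eqI simp: zero_quat_def one_quat_def plus_quat_def
      minus_quat_def uminus_quat_def times_quat_def algebra_simps)
end

definition qI :: quat where "qI = Quat 0 1 0 0"
definition qJ :: quat where "qJ = Quat 0 0 1 0"
definition qK :: quat where "qK = Quat 0 0 0 1"
definition qcnj :: "quat \<Rightarrow> quat" where "qcnj q = Quat (qre q) (- qi q) (- qj q) (- qk q)"
definition qnorm :: "quat \<Rightarrow> quat" where "qnorm q = q * qcnj q"

definition qscale :: "real \<Rightarrow> quat \<Rightarrow> quat" where
  "qscale r q = Quat (r * qre q) (r * qi q) (r * qj q) (r * qk q)"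

definition v1 :: quat where "v1 = 1"
definition v2 :: quat where "v2 = qI"
definition v3 :: quat where "v3 = qscale (1/2) (1 + qI + qscale (sqrt 2) qJ)"
definition v4 :: quat where "v4 = qscale (1/2) (1 + qI + qscale (sqrt 2) qK)"

definition H122 :: "quat set" where
  "H122 = {of_int a * v1 + of_int b * v2 + of_int c * v3 + of_int d * v4 | a b c d :: int. True}"

definition H122_unit :: "quat \<Rightarrow> bool" where
  "H122_unit u \<longleftrightarrow> u \<in> H122 \<and> (\<exists>w\<in>H122. u * w = 1 \<and> w * u = 1)"

definition H122_prime :: "quat \<Rightarrow> bool" where
  "H122_prime p \<longleftrightarrow> p \<in> H122 \<and> p \<noteq> 0 \<and> \<not> H122_unit p \<and>
     (\<forall>a\<in>H122. \<forall>b\<in>H122. p = a * b \<longrightarrow> H122_unit a \<or> H122_unit b)"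

end

theory Submission imports Defs begin

lemma quat_sel_simps[simp]:
  "qre 0 = 0" "qi 0 = 0" "qj 0 = 0" "qk 0 = 0"
  "qre 1 = 1" "qi 1 = 0" "qj 1 = 0" "qk 1 = 0"
  "qre (x + y) = qre x + qre y" "qi (x + y) = qi x + qi y" "qj (x + y) = qj x + qj y" "qk (x + y) = qk x + qk y"
  "qre (x - y) = qre x - qre y" "qi (x - y) = qi x - qi y" "qj (x - y) = qj x - qj y" "qk (x - y) = qk x - qk y"
  "qre (- x) = - qre x" "qi (- x) = - qi x" "qj (- x) = - qj x" "qk (- x) = - qk x"
  "qre (x * y) = qre x * qre y - qi x * qi y - qj x * qj y - qk x * qk y"
  "qi (x * y) = qre x * qi y + qi x * qre y + qj x * qk y - qk x * qj y"
  "qj (x * y) = qre x * qj y - qi x * qk y + qj x * qre y + qk x * qi y"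
  "qk (x * y) = qre x * qk y + qi x * qj y - qj x * qi y + qk x * qre y"
  by (simp_all add: zero_quat_def one_quat_def plus_quat_def minus_quat_def uminus_quat_def times_quat_def)

lemma of_nat_quat: "(of_nat n :: quat) = Quat (real n) 0 0 0"
  by (induction n) (auto intro: quat_eqI)

lemma of_int_quat: "(of_int n :: quat) = Quat (real_of_int n) 0 0 0"
  by (cases n rule: int_cases) (auto intro!: quat_eqI simp: of_nat_quat)

definition E :: "int \<Rightarrow> int \<Rightarrow> int \<Rightarrow> int \<Rightarrow> quat" where
  "E a b c d = Quat (a + (c+d)/2) (b + (c+d)/2) (c * sqrt 2 / 2) (d * sqrt 2 / 2)"

lemma E_eq: "of_int a * v1 + of_int b * v2 + of_int c * v3 + of_int d * v4 = E a b c d"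
  by (rule quat_eqI) (simp_all add: E_def of_int_quat v1_def v2_def v3_def v4_def qI_def qJ_def qK_def qscale_def field_simps)

lemma H122_E: "H122 = {E a b c d | a b c d. True}"
  unfolding H122_def E_eq ..

lemma E_mult: "E a b c d * E e f g h =
  E (a*e - b*f - b*g - c*g - d*f - d*g - d*h) (a*f + b*e + b*h + c*f + c*h - d*g)
    (a*g - b*h + c*e + c*g + d*f + d*g) (a*h + b*g - c*f + d*e + d*g + d*h)"
  by (rule quat_eqI) (simp_all add: E_def algebra_simps add_divide_distrib diff_divide_distrib)


definition nsq :: "quat \<Rightarrow> real" where
  "nsq q = qre q ^ 2 + qi q ^ 2 + qj q ^ 2 + qk q ^ 2"

lemma nsq_nonneg: "nsq x \<ge> 0" by (simp add: nsq_def)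

lemma nsq_zero_iff: "nsq x = 0 \<longleftrightarrow> x = 0"
  by (cases x) (auto simp: nsq_def zero_quat_def add_nonneg_eq_0_iff)

lemma nsq_mult: "nsq (x * y) = nsq x * nsq y"
  by (simp add: nsq_def power2_eq_square algebra_simps)

lemma qcnj_sel[simp]: "qre (qcnj x) = qre x" "qi (qcnj x) = - qi x" "qj (qcnj x) = - qj x" "qk (qcnj x) = - qk x"
  by (simp_all add: qcnj_def)

lemma mult_cnj: "x * qcnj x = Quat (nsq x) 0 0 0"
  by (rule quat_eqI) (simp_all add: nsq_def power2_eq_square algebra_simps)

lemma cnj_mult: "qcnj x * x = Quat (nsq x) 0 0 0"
  by (rule quat_eqI) (simp_all add: nsq_def power2_eq_square algebra_simps)

lemma cnj_cnj[simp]: "qcnj (qcnj x) = x"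
  by (rule quat_eqI) simp_all

lemma cnj_prod: "qcnj (x * y) = qcnj y * qcnj x"
  by (rule quat_eqI) (simp_all add: algebra_simps)

lemma cnj_of_nat[simp]: "qcnj (of_nat n) = of_nat n"
  by (rule quat_eqI) (simp_all add: of_nat_quat)

lemma nsq_of_nat: "nsq (of_nat n) = real n ^ 2"
  by (simp add: nsq_def of_nat_quat)

lemma qnorm_eq: "qnorm x = of_nat p \<longleftrightarrow> nsq x = real p"
  by (auto simp: qnorm_def mult_cnj of_nat_quat)

lemma memH: "x \<in> H122 \<longleftrightarrow> (\<exists>a b c d. x = E a b c d)"
  by (auto simp: H122_E)

lemma E_add: "E a b c d + E e f g h = E (a+e) (b+f) (c+g) (d+h)"
  by (rule quat_eqI) (simp_all add: E_def field_simps)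
lemma E_diff: "E a b c d - E e f g h = E (a-e) (b-f) (c-g) (d-h)"
  by (rule quat_eqI) (simp_all add: E_def field_simps)
lemma E_cnj: "qcnj (E a b c d) = E (a+c+d) (-b) (-c) (-d)"
  by (rule quat_eqI) (simp_all add: E_def field_simps)
lemma E_nat: "of_nat n = E (int n) 0 0 0"
  by (rule quat_eqI) (simp_all add: E_def of_nat_quat)

lemma H_add: "x \<in> H122 \<Longrightarrow> y \<in> H122 \<Longrightarrow> x + y \<in> H122"
  by (clarsimp simp: memH E_add) blast
lemma H_diff: "x \<in> H122 \<Longrightarrow> y \<in> H122 \<Longrightarrow> x - y \<in> H122"
  by (clarsimp simp: memH E_diff) blast
lemma H_mult: "x \<in> H122 \<Longrightarrow> y \<in> H122 \<Longrightarrow> x * y \<in> H122"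
  by (clarsimp simp: memH E_mult) blast
lemma H_cnj: "x \<in> H122 \<Longrightarrow> qcnj x \<in> H122"
  by (clarsimp simp: memH E_cnj) blast
lemma H_nat: "of_nat n \<in> H122"
  by (clarsimp simp: memH E_nat) blast
lemma H_0: "0 \<in> H122" using H_nat[of 0] by simp
lemma H_1: "1 \<in> H122" using H_nat[of 1] by simp

lemma nsq_E: "nsq (E a b c d) = of_int (a^2+b^2+(a+b)*(c+d)+c^2+c*d+d^2)"
  by (simp add: nsq_def E_def power2_eq_square field_simps)

definition Nn :: "quat \<Rightarrow> nat" where "Nn x = nat \<lfloor>nsq x\<rfloor>"

lemma nsq_Nn: "x \<in> H122 \<Longrightarrow> nsq x = real (Nn x)"
proof -
  assume "x \<in> H122"
  then obtain a b c d where x: "x = E a b c d" by (auto simp: memH)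
  define k where "k = a^2+b^2+(a+b)*(c+d)+c^2+c*d+d^2"
  have "nsq x = of_int k" by (simp add: x nsq_E k_def)
  moreover have "k \<ge> 0" using nsq_nonneg[of x] \<open>nsq x = of_int k\<close> by simp
  ultimately show ?thesis by (simp add: Nn_def)
qed

lemma Nn_mult: "x \<in> H122 \<Longrightarrow> y \<in> H122 \<Longrightarrow> Nn (x * y) = Nn x * Nn y"
  using nsq_Nn[of x] nsq_Nn[of y] nsq_Nn[of "x*y"] H_mult[of x y] nsq_mult[of x y]
  by (metis of_nat_eq_iff of_nat_mult)

lemma Nn_zero_iff: "x \<in> H122 \<Longrightarrow> Nn x = 0 \<longleftrightarrow> x = 0"
  using nsq_Nn nsq_zero_iff by (metis of_nat_eq_0_iff)

lemma Nn_nat: "Nn (of_nat n) = n ^ 2"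
  using nsq_Nn[OF H_nat[of n]] nsq_of_nat[of n] by (metis of_nat_eq_iff of_nat_power)

lemma quat_one: "Quat 1 0 0 0 = 1" by (simp add: one_quat_def)

lemma unit_iff: "H122_unit u \<longleftrightarrow> u \<in> H122 \<and> Nn u = 1"
proof
  assume "H122_unit u"
  then obtain w where u: "u \<in> H122" "w \<in> H122" "u * w = 1" by (auto simp: H122_unit_def)
  then have "Nn u * Nn w = 1" using Nn_mult[of u w] Nn_nat[of 1] by simp
  then show "u \<in> H122 \<and> Nn u = 1" using u by simp
next
  assume u: "u \<in> H122 \<and> Nn u = 1"
  then have "nsq u = 1" using nsq_Nn by simp
  then have "u * qcnj u = 1" "qcnj u * u = 1" by (simp_all add: mult_cnj cnj_mult quat_one)
  then show "H122_unit u" using u H_cnj by (auto simp: H122_unit_def)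
qed


lemma round_sq: "(x - of_int (round x))^2 \<le> 1/4"
proof -
  have "\<bar>x - of_int (round x)\<bar> \<le> 1/2" using of_int_round_abs_le[of x] by linarith
  then have "\<bar>x - of_int (round x)\<bar>^2 \<le> (1/2)^2" by (rule power_mono) simp
  then show ?thesis by (simp add: power2_eq_square)
qed

lemma approx: "\<exists>q\<in>H122. nsq (t - q) < 1"
proof -
  define c where "c = round (sqrt 2 * qj t)"
  define d where "d = round (sqrt 2 * qk t)"
  define a where "a = round (qre t - (c+d)/2)"
  define b where "b = round (qi t - (c+d)/2)"
  have s2: "sqrt 2 * sqrt 2 = 2" by simp
  have e1: "(qre t - (a + (c+d)/2))^2 \<le> 1/4" using round_sq[of "qre t - (c+d)/2"]
    by (simp add: a_def algebra_simps)
  have e2: "(qi t - (b + (c+d)/2))^2 \<le> 1/4" using round_sq[of "qi t - (c+d)/2"]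
    by (simp add: b_def algebra_simps)
  have "qj t - c * sqrt 2 / 2 = (sqrt 2 * qj t - c) * (sqrt 2 / 2)"
    by (simp add: algebra_simps s2)
  then have "(qj t - c * sqrt 2 / 2)^2 = (sqrt 2 * qj t - c)^2 * (sqrt 2 / 2)^2"
    by (simp only: power_mult_distrib)
  also have "(sqrt 2 / 2)^2 = (1/2::real)" by (simp add: power_divide)
  finally have "(qj t - c * sqrt 2 / 2)^2 = (sqrt 2 * qj t - c)^2 / 2" by simp
  then have e3: "(qj t - c * sqrt 2 / 2)^2 \<le> 1/8" using round_sq[of "sqrt 2 * qj t"]
    by (simp add: c_def)
  have "qk t - d * sqrt 2 / 2 = (sqrt 2 * qk t - d) * (sqrt 2 / 2)"
    by (simp add: algebra_simps s2)
  then have "(qk t - d * sqrt 2 / 2)^2 = (sqrt 2 * qk t - d)^2 * (sqrt 2 / 2)^2"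
    by (simp only: power_mult_distrib)
  also have "(sqrt 2 / 2)^2 = (1/2::real)" by (simp add: power_divide)
  finally have "(qk t - d * sqrt 2 / 2)^2 = (sqrt 2 * qk t - d)^2 / 2" by simp
  then have e4: "(qk t - d * sqrt 2 / 2)^2 \<le> 1/8" using round_sq[of "sqrt 2 * qk t"]
    by (simp add: d_def)
  have "nsq (t - E a b c d) = (qre t - (a + (c+d)/2))^2 + (qi t - (b + (c+d)/2))^2
     + (qj t - c * sqrt 2 / 2)^2 + (qk t - d * sqrt 2 / 2)^2"
    by (simp add: nsq_def E_def)
  also have "\<dots> < 1" using e1 e2 e3 e4 by linarith
  finally show ?thesis using memH by blast
qed

definition qinv :: "quat \<Rightarrow> quat" where "qinv x = qscale (1 / nsq x) (qcnj x)"

lemma qscale_mult: "qscale r y * z = qscale r (y * z)"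
  by (rule quat_eqI) (simp_all add: qscale_def algebra_simps)

lemma qinv_left: "x \<noteq> 0 \<Longrightarrow> qinv x * x = 1"
proof -
  assume "x \<noteq> 0"
  then have n: "nsq x \<noteq> 0" by (simp add: nsq_zero_iff)
  have "qinv x * x = qscale (1 / nsq x) (Quat (nsq x) 0 0 0)"
    by (simp add: qinv_def qscale_mult cnj_mult)
  also have "\<dots> = 1" using n by (simp add: qscale_def one_quat_def)
  finally show ?thesis .
qed

lemma division: "\<alpha> \<in> H122 \<Longrightarrow> \<delta> \<in> H122 \<Longrightarrow> \<delta> \<noteq> 0 \<Longrightarrow> \<exists>q\<in>H122. Nn (\<alpha> - q * \<delta>) < Nn \<delta>"
proof -
  assume H: "\<alpha> \<in> H122" "\<delta> \<in> H122" "\<delta> \<noteq> 0"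
  obtain q where q: "q \<in> H122" "nsq (\<alpha> * qinv \<delta> - q) < 1" using approx by blast
  have "\<alpha> - q * \<delta> = (\<alpha> * qinv \<delta> - q) * \<delta>"
    using qinv_left[OF H(3)] by (simp add: algebra_simps mult.assoc)
  then have "nsq (\<alpha> - q * \<delta>) = nsq (\<alpha> * qinv \<delta> - q) * nsq \<delta>" by (simp add: nsq_mult)
  also have "\<dots> < 1 * nsq \<delta>"
  proof (rule mult_strict_right_mono[OF q(2)])
    show "0 < nsq \<delta>" using H(3) nsq_zero_iff nsq_nonneg by (metis less_eq_real_def)
  qed
  also have "\<dots> = nsq \<delta>" by simp
  finally have "real (Nn (\<alpha> - q * \<delta>)) < real (Nn \<delta>)"
    using nsq_Nn H q H_diff H_mult by metis
  then show ?thesis using q by auto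
qed

lemma gcd_exists:
  assumes "\<alpha> \<in> H122" "\<beta> \<in> H122" "\<beta> \<noteq> 0"
  shows "\<exists>\<delta> x y a b. \<delta> \<in> H122 \<and> x \<in> H122 \<and> y \<in> H122 \<and> a \<in> H122 \<and> b \<in> H122 \<and>
           \<delta> = x * \<alpha> + y * \<beta> \<and> \<alpha> = a * \<delta> \<and> \<beta> = b * \<delta>"
proof -
  define P where "P n \<longleftrightarrow> (\<exists>x\<in>H122. \<exists>y\<in>H122. x * \<alpha> + y * \<beta> \<noteq> 0 \<and> Nn (x * \<alpha> + y * \<beta>) = n)" for n
  have "P (Nn \<beta>)" unfolding P_def using assms H_0 H_1 by (intro bexI[of _ 0] bexI[of _ 1]) auto
  then have "P (LEAST n. P n)" by (rule LeastI)
  then obtain x y where xy: "x \<in> H122" "y \<in> H122" "x * \<alpha> + y * \<beta> \<noteq> 0"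
    "Nn (x * \<alpha> + y * \<beta>) = (LEAST n. P n)" unfolding P_def by blast
  define \<delta> where "\<delta> = x * \<alpha> + y * \<beta>"
  have dH: "\<delta> \<in> H122" unfolding \<delta>_def using xy assms H_add H_mult by blast
  have key: "\<exists>a\<in>H122. \<gamma> = a * \<delta>" if g: "\<gamma> = u * \<alpha> + v * \<beta>" "u \<in> H122" "v \<in> H122" for \<gamma> u v
  proof -
    have gH: "\<gamma> \<in> H122" using g assms H_add H_mult by blast
    obtain q where q: "q \<in> H122" "Nn (\<gamma> - q * \<delta>) < Nn \<delta>"
      using division[OF gH dH] xy(3) unfolding \<delta>_def by blast
    have r: "\<gamma> - q * \<delta> = (u - q * x) * \<alpha> + (v - q * y) * \<beta>"
      unfolding g \<delta>_def by (simp add: algebra_simps mult.assoc)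
    have rH: "u - q * x \<in> H122" "v - q * y \<in> H122" using g q xy H_diff H_mult by auto
    have "\<gamma> - q * \<delta> = 0"
    proof (rule ccontr)
      assume "\<gamma> - q * \<delta> \<noteq> 0"
      then have "P (Nn (\<gamma> - q * \<delta>))" unfolding P_def r using rH by blast
      then have "(LEAST n. P n) \<le> Nn (\<gamma> - q * \<delta>)" by (rule Least_le)
      then show False using q(2) xy(4) \<delta>_def by simp
    qed
    then show ?thesis using q by auto
  qed
  obtain a where a: "a \<in> H122" "\<alpha> = a * \<delta>" using key[of \<alpha> 1 0] H_0 H_1 by auto
  obtain b where b: "b \<in> H122" "\<beta> = b * \<delta>" using key[of \<beta> 0 1] H_0 H_1 by auto
  show ?thesis using a b xy dH \<delta>_def by blast
qed


lemma sq_inj_aux: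
  fixes x x' h :: int
  assumes p: "prime (int p)" and h: "2 * h + 1 = int p"
    and x: "0 \<le> x" "x \<le> h" and x': "0 \<le> x'" "x' \<le> h" and d: "int p dvd x^2 - x'^2"
  shows "x = x'"
proof -
  have "x^2 - x'^2 = (x - x') * (x + x')" by (simp add: power2_eq_square algebra_simps)
  then have "int p dvd (x - x') \<or> int p dvd (x + x')" using d p by (simp add: prime_dvd_mult_iff)
  then show ?thesis
  proof
    assume a: "int p dvd (x - x')"
    show ?thesis
    proof (rule ccontr)
      assume "x \<noteq> x'"
      then have "\<bar>int p\<bar> \<le> \<bar>x - x'\<bar>" using dvd_imp_le_int[OF _ a] by simp
      then show False using x x' h by linarith
    qed
  next
    assume a: "int p dvd (x + x')"
    show ?thesis
    proof (cases "x + x' = 0")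
      case True then show ?thesis using x x' by simp
    next
      case False
      then have "\<bar>int p\<bar> \<le> \<bar>x + x'\<bar>" using dvd_imp_le_int[OF _ a] by simp
      then show ?thesis using x x' h by linarith
    qed
  qed
qed

lemma pigeon:
  assumes "prime p" "odd p"
  shows "\<exists>x y::int. int p dvd x^2 + y^2 + 2"
proof -
  have pi: "prime (int p)" using assms by simp
  have p2: "p \<ge> 2" using assms prime_ge_2_nat by blast
  define h where "h = (int p - 1) div 2"
  have h: "2 * h + 1 = int p" "0 \<le> h" using assms p2 unfolding h_def by (auto elim!: oddE)
  define A where "A = (\<lambda>x. x^2 mod int p) ` {0..h}"
  define B where "B = (\<lambda>y. (-2 - y^2) mod int p) ` {0..h}"
  have injA: "inj_on (\<lambda>x. x^2 mod int p) {0..h}"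
  proof (rule inj_onI)
    fix x x' assume "x \<in> {0..h}" "x' \<in> {0..h}" "x^2 mod int p = x'^2 mod int p"
    then show "x = x'" using sq_inj_aux[OF pi h(1)] by (simp add: mod_eq_dvd_iff)
  qed
  have injB: "inj_on (\<lambda>y. (-2 - y^2) mod int p) {0..h}"
  proof (rule inj_onI)
    fix x x' assume a: "x \<in> {0..h}" "x' \<in> {0..h}" "(-2 - x^2) mod int p = (-2 - x'^2) mod int p"
    then have "int p dvd (-2 - x^2) - (-2 - x'^2)" by (simp add: mod_eq_dvd_iff)
    then have "int p dvd x'^2 - x^2" by simp
    then show "x = x'" using sq_inj_aux[OF pi h(1)] a by (metis atLeastAtMost_iff)
  qed
  have cA: "card A = nat (h + 1)" unfolding A_def using card_image[OF injA] by simp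
  have cB: "card B = nat (h + 1)" unfolding B_def using card_image[OF injB] by simp
  have sub: "A \<union> B \<subseteq> {0..<int p}" unfolding A_def B_def using p2 by auto
  have "A \<inter> B \<noteq> {}"
  proof
    assume "A \<inter> B = {}"
    then have "card (A \<union> B) = card A + card B" by (intro card_Un_disjoint) (auto simp: A_def B_def)
    moreover have "card (A \<union> B) \<le> card {0..<int p}" by (rule card_mono[OF _ sub]) simp
    ultimately show False using cA cB h by simp
  qed
  then obtain x y where "x^2 mod int p = (-2 - y^2) mod int p" unfolding A_def B_def by blast
  then have "int p dvd x^2 - (-2 - y^2)" by (simp add: mod_eq_dvd_iff)
  then show ?thesis by (metis diff_minus_eq_add minus_diff_eq add.commute add.left_commute diff_conv_add_uminus)
qed


lemma Nn_cnj: "Nn (qcnj x) = Nn x"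
  by (simp add: Nn_def nsq_def)

lemma of_nat_Nn: "x \<in> H122 \<Longrightarrow> of_nat (Nn x) = x * qcnj x"
  by (simp add: mult_cnj nsq_Nn of_nat_quat)

lemma nat_cent: "(y::quat) * (of_nat p * z) = of_nat p * (y * z)"
  by (metis mult.assoc mult_of_nat_commute)

lemma nat_cent2: "(y::quat) * of_nat p = of_nat p * y"
  by (rule mult_of_nat_commute[symmetric])

lemma unit_case:
  assumes aH: "\<alpha> \<in> H122" and dv: "p dvd Nn \<alpha>" and H: "x \<in> H122" "y \<in> H122"
    and d: "\<delta> = x * \<alpha> + y * of_nat p" and u: "H122_unit \<delta>"
  shows "\<exists>z\<in>H122. \<alpha> = of_nat p * z"
proof -
  obtain w where w: "w \<in> H122" "w * \<delta> = 1" using u by (auto simp: H122_unit_def)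
  obtain m where m: "Nn \<alpha> = p * m" using dv by blast
  have "w * (x * \<alpha> + y * of_nat p) = 1" using w(2) unfolding d .
  then have one: "w * x * \<alpha> + w * y * of_nat p = 1" by (simp add: distrib_left mult.assoc)
  have "\<alpha> * qcnj \<alpha> = of_nat (p * m)" using of_nat_Nn[OF aH] m by metis
  then have ac: "\<alpha> * qcnj \<alpha> = of_nat p * of_nat m" by (simp only: of_nat_mult)
  define z0 where "z0 = w * x * of_nat m + w * y * qcnj \<alpha>"
  have "qcnj \<alpha> = 1 * qcnj \<alpha>" by simp
  also have "\<dots> = (w * x * \<alpha> + w * y * of_nat p) * qcnj \<alpha>" by (simp only: one)
  also have "\<dots> = w * x * (\<alpha> * qcnj \<alpha>) + (w * y * of_nat p) * qcnj \<alpha>" by (simp only: distrib_right mult.assoc)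
  also have "\<dots> = w * x * (of_nat p * of_nat m) + (of_nat p * (w * y)) * qcnj \<alpha>" by (simp only: ac nat_cent2[of "w * y" p])
  also have "\<dots> = of_nat p * (w * x * of_nat m) + of_nat p * (w * y * qcnj \<alpha>)" by (simp only: mult.assoc nat_cent[of x p "of_nat m"] nat_cent[of w p "x * of_nat m"])
  also have "\<dots> = of_nat p * z0" unfolding z0_def by (simp only: distrib_left)
  finally have "\<alpha> = qcnj (of_nat p * z0)" by (metis cnj_cnj)
  also have "\<dots> = of_nat p * qcnj z0" by (simp only: cnj_prod cnj_of_nat nat_cent2[of "qcnj z0" p])
  finally have fin: "\<alpha> = of_nat p * qcnj z0" .
  have "z0 \<in> H122" unfolding z0_def by (intro H_add H_mult H_nat H_cnj aH H w(1))
  then show ?thesis using fin H_cnj by blast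
qed

lemma Nn_E: "Nn (E a b c d) = nat (a^2+b^2+(a+b)*(c+d)+c^2+c*d+d^2)"
  unfolding Nn_def nsq_E floor_of_int ..

lemma norm_p:
  assumes p: "prime p"
  shows "\<exists>\<rho>\<in>H122. Nn \<rho> = p"
proof (cases "p = 2")
  case True
  have "Nn (E 1 1 0 0) = 2" by (simp add: Nn_E)
  then show ?thesis using True memH by blast
next
  case False
  have p2: "p > 2" using prime_ge_2_nat[OF p] False by linarith
  have odd: "odd p" by (rule prime_odd_nat[OF p p2])
  have p3: "p \<ge> 3" using p2 by simp
  obtain x y :: int where xy: "int p dvd x^2 + y^2 + 2" using pigeon[OF p odd] by blast
  define \<alpha> where "\<alpha> = E (x - 1) (y - 1) 2 0"
  have aH: "\<alpha> \<in> H122" unfolding \<alpha>_def memH by blast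
  have "int (Nn \<alpha>) = x^2 + y^2 + 2"
  proof -
    have "(x - 1)^2 + (y - 1)^2 + (x - 1 + (y - 1)) * (2 + 0) + 2^2 + 2 * 0 + 0^2 = x^2 + y^2 + 2"
      by (simp add: power2_eq_square algebra_simps)
    moreover have "x^2 + y^2 + 2 \<ge> (0::int)" by (simp add: add_nonneg_nonneg)
    ultimately show ?thesis unfolding \<alpha>_def Nn_E by simp
  qed
  then have "int p dvd int (Nn \<alpha>)" using xy by simp
  then have dv: "p dvd Nn \<alpha>" by (simp only: int_dvd_int_iff)
  have notp: "\<not> (\<exists>z\<in>H122. \<alpha> = of_nat p * z)"
  proof
    assume "\<exists>z\<in>H122. \<alpha> = of_nat p * z"
    then obtain z where z: "z \<in> H122" "\<alpha> = of_nat p * z" by blast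
    then obtain a' b' c' d' where "z = E a' b' c' d'" using memH by blast
    with z have "\<alpha> = of_nat p * E a' b' c' d'" by simp
    then have "qj \<alpha> = qj (of_nat p * E a' b' c' d')" by simp
    then have "sqrt 2 = real p * (c' * sqrt 2 / 2)" by (simp add: \<alpha>_def E_def of_nat_quat)
    then have "2 = real p * c'" by (simp add: field_simps)
    then have "real_of_int 2 = real_of_int (int p * c')" by simp
    then have "(2::int) = int p * c'" by (simp only: of_int_eq_iff)
    moreover have "int p \<ge> 3" using p3 by simp
    ultimately show False
    proof (cases "c' \<ge> 1")
      case True
      then have "int p * 1 \<le> int p * c'" by (intro mult_left_mono) auto
      then show False using \<open>2 = int p * c'\<close> \<open>int p \<ge> 3\<close> by linarith
    next
      case False
      then have "int p * c' \<le> 0" by (intro mult_nonneg_nonpos) auto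
      then show False using \<open>2 = int p * c'\<close> by linarith
    qed
  qed
  have pnz: "(of_nat p :: quat) \<noteq> 0" using p prime_gt_0_nat[OF p] by (simp add: of_nat_quat zero_quat_def)
  obtain \<delta> x' y' a b where g: "\<delta> \<in> H122" "x' \<in> H122" "y' \<in> H122" "a \<in> H122" "b \<in> H122"
    "\<delta> = x' * \<alpha> + y' * of_nat p" "\<alpha> = a * \<delta>" "of_nat p = b * \<delta>"
    using gcd_exists[OF aH H_nat pnz] by blast
  have nu: "\<not> H122_unit \<delta>" using unit_case[OF aH dv g(2,3,6)] notp by blast
  have "Nn (of_nat p) = Nn (b * \<delta>)" using g(8) by simp
  then have "p^2 = Nn b * Nn \<delta>" using Nn_mult[OF g(5,1)] Nn_nat by simp
  then have "Nn \<delta> dvd p^2" by simp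
  then obtain i where i: "i \<le> 2" "Nn \<delta> = p^i" using divides_primepow_nat[OF p] by blast
  show ?thesis
  proof (cases i)
    case 0 then show ?thesis using i nu g(1) unit_iff by simp
  next
    case (Suc j)
    show ?thesis
    proof (cases j)
      case 0 then show ?thesis using i Suc g(1) by auto
    next
      case (Suc k)
      then have "i = 2" using i \<open>i = Suc j\<close> by simp
      then have "p^2 = Nn b * p^2" using \<open>p^2 = Nn b * Nn \<delta>\<close> i by simp
      then have "Nn b = 1" using p by (simp add: prime_gt_0_nat)
      then obtain b' where b': "b' \<in> H122" "b' * b = 1" using g(5) unit_iff by (auto simp: H122_unit_def)
      have "b' * of_nat p = (b' * b) * \<delta>" by (simp only: g(8) mult.assoc)
      then have "\<delta> = b' * of_nat p" using b'(2) by simp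
      then have "\<alpha> = (a * b') * of_nat p" using g(7) by (simp only: mult.assoc)
      then have "\<alpha> = of_nat p * (a * b')" by (simp only: nat_cent2[of "a * b'" p])
      then show ?thesis using notp g(4) b'(1) H_mult by blast
    qed
  qed
qed

theorem theorem37:
  assumes "\<pi> \<in> H122"
  shows "H122_prime \<pi> \<longleftrightarrow> (\<exists>p::nat. prime p \<and> qnorm \<pi> = of_nat p)"
proof
  assume pr: "H122_prime \<pi>"
  have nz: "\<pi> \<noteq> 0" and nu: "\<not> H122_unit \<pi>"
    and irr: "\<And>a b. a \<in> H122 \<Longrightarrow> b \<in> H122 \<Longrightarrow> \<pi> = a * b \<Longrightarrow> H122_unit a \<or> H122_unit b"
    using pr by (auto simp: H122_prime_def)
  define n where "n = Nn \<pi>"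
  have n0: "n \<noteq> 0" using nz Nn_zero_iff[OF assms] n_def by simp
  have n1: "n \<noteq> 1" using nu assms n_def by (simp add: unit_iff)
  obtain p where p: "prime p" "p dvd n" using prime_factor_nat[OF n1] by blast
  obtain \<rho> where \<rho>: "\<rho> \<in> H122" "Nn \<rho> = p" using norm_p[OF p(1)] by blast
  have p1: "p \<noteq> 1" using p(1) by auto
  have nopm: "\<not> (\<exists>z\<in>H122. \<pi> = of_nat p * z)"
  proof
    assume "\<exists>z\<in>H122. \<pi> = of_nat p * z"
    then obtain z where z: "z \<in> H122" "\<pi> = of_nat p * z" by blast
    have "of_nat p = \<rho> * qcnj \<rho>" using of_nat_Nn[OF \<rho>(1)] \<rho>(2) by simp
    then have "\<pi> = \<rho> * (qcnj \<rho> * z)" using z(2) by (simp add: mult.assoc)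
    moreover have cz: "qcnj \<rho> * z \<in> H122" using H_mult[OF H_cnj[OF \<rho>(1)] z(1)] .
    ultimately have "H122_unit \<rho> \<or> H122_unit (qcnj \<rho> * z)" using irr[OF \<rho>(1)] by blast
    moreover have "\<not> H122_unit \<rho>" using unit_iff \<rho> p1 by simp
    moreover have "Nn (qcnj \<rho> * z) = p * Nn z" using Nn_mult[OF H_cnj[OF \<rho>(1)] z(1)] Nn_cnj \<rho>(2) by simp
    ultimately have "p * Nn z = 1" using unit_iff by auto
    then show False using p1 by simp
  qed
  have pnz: "(of_nat p :: quat) \<noteq> 0" using prime_gt_0_nat[OF p(1)] by (simp add: of_nat_quat zero_quat_def)
  obtain \<delta> x y a b where g: "\<delta> \<in> H122" "x \<in> H122" "y \<in> H122" "a \<in> H122" "b \<in> H122"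
    "\<delta> = x * \<pi> + y * of_nat p" "\<pi> = a * \<delta>" "of_nat p = b * \<delta>"
    using gcd_exists[OF assms H_nat pnz] by blast
  have pd: "p dvd Nn \<pi>" using p(2) n_def by simp
  have dnu: "\<not> H122_unit \<delta>" using unit_case[OF assms pd g(2,3,6)] nopm by blast
  have au: "H122_unit a" using irr[OF g(4,1,7)] dnu by blast
  have nd: "n = Nn \<delta>" using Nn_mult[OF g(4,1)] g(7) au unit_iff n_def by simp
  have "Nn (of_nat p) = Nn (b * \<delta>)" using g(8) by simp
  then have pb: "p^2 = Nn b * n" using Nn_mult[OF g(5,1)] Nn_nat nd by simp
  then have "n dvd p^2" by simp
  then obtain i where i: "i \<le> 2" "n = p^i" using divides_primepow_nat[OF p(1)] by blast
  have "n = p"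
  proof (cases i)
    case 0 then show ?thesis using i n1 by simp
  next
    case (Suc j)
    show ?thesis
    proof (cases j)
      case 0 then show ?thesis using i Suc by auto
    next
      case (Suc k)
      then have "i = 2" using i \<open>i = Suc j\<close> by simp
      then have "p^2 = Nn b * p^2" using pb i by simp
      then have "Nn b = 1" using p by (simp add: prime_gt_0_nat)
      then obtain b' where b': "b' \<in> H122" "b' * b = 1" using g(5) unit_iff by (auto simp: H122_unit_def)
      have "b' * of_nat p = (b' * b) * \<delta>" by (simp only: g(8) mult.assoc)
      then have "\<delta> = b' * of_nat p" using b'(2) by simp
      then have "\<pi> = (a * b') * of_nat p" using g(7) by (simp only: mult.assoc)
      then have "\<pi> = of_nat p * (a * b')" by (simp only: nat_cent2[of "a * b'" p])
      then show ?thesis using nopm g(4) b'(1) H_mult by blast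
    qed
  qed
  then have "nsq \<pi> = real p" using nsq_Nn[OF assms] n_def by simp
  then show "\<exists>p::nat. prime p \<and> qnorm \<pi> = of_nat p" using p(1) qnorm_eq by blast
next
  assume "\<exists>p::nat. prime p \<and> qnorm \<pi> = of_nat p"
  then obtain p :: nat where p: "prime p" "qnorm \<pi> = of_nat p" by blast
  have "real (Nn \<pi>) = real p" using p(2) qnorm_eq nsq_Nn[OF assms] by simp
  then have np: "Nn \<pi> = p" by simp
  have "\<pi> \<noteq> 0" using np p(1) Nn_zero_iff[OF assms] by auto
  moreover have "\<not> H122_unit \<pi>" using np p(1) unit_iff by auto
  moreover have "H122_unit a \<or> H122_unit b" if ab: "a \<in> H122" "b \<in> H122" "\<pi> = a * b" for a b
  proof -
    have "prime (Nn a * Nn b)" using Nn_mult[OF ab(1,2)] ab(3) np p(1) by simp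
    then have "Nn a = 1 \<or> Nn b = 1" by (rule prime_product)
    then show ?thesis using ab unit_iff by auto
  qed
  ultimately show "H122_prime \<pi>" using assms unfolding H122_prime_def by blast
qed

end
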